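(* As formal power series, $$1+\frac{q^2+q^3}{1-q^2}+\sum_{n\ge2}\frac{(-q^3;q^4)_{n-1}\,q^{2n}(1+q^{2n-1})}{(q^2;q^2)_n}=\prod_{\substack{n\ge1\\ n\not\equiv1,5,6\ (\mathrm{mod}\ 8)}}\frac{1}{1-q^n}.$$
   Context: $(a;q)_n=\prod_{j=0}^{n-1}(1-aq^j)$. *)

theory Defs
  imports "HOL-Analysis.Analysis" "HOL-Computational_Algebra.Formal_Power_Series"
begin

definition qpoch :: "'a::comm_ring_1 \<Rightarrow> 'a \<Rightarrow> nat \<Rightarrow> 'a" where
  "qpoch a q n = (\<Prod>j<n. (1 - a * q ^ j))"

end

theory Submission
  imports Defs
begin

unbundle no vec_syntax
unbundle fps_syntax

definition fcong :: "nat \<Rightarrow> rat fps \<Rightarrow> rat fps \<Rightarrow> bool" where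
  "fcong N f g \<longleftrightarrow> (\<forall>i\<le>N. f$i = g$i)"

lemma fcong_refl: "fcong N f f" by (simp add: fcong_def)
lemma fcong_sym: "fcong N f g \<Longrightarrow> fcong N g f" by (simp add: fcong_def)
lemma fcong_trans: "fcong N f g \<Longrightarrow> fcong N g h \<Longrightarrow> fcong N f h" by (simp add: fcong_def)

lemma fcong_mult:
  assumes "fcong N f f'" "fcong N g g'"
  shows "fcong N (f*g) (f'*g')"
  unfolding fcong_def
proof (intro allI impI)
  fix i assume i: "i \<le> N"
  have "(f*g)$i = (\<Sum>j=0..i. f$j * g$(i-j))" by (simp add: fps_mult_nth)
  also have "\<dots> = (\<Sum>j=0..i. f'$j * g'$(i-j))"
    using assms i by (intro sum.cong) (auto simp: fcong_def)
  also have "\<dots> = (f'*g')$i" by (simp add: fps_mult_nth)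
  finally show "(f*g)$i = (f'*g')$i" .
qed

lemma fcong_prod:
  assumes "\<And>i. i \<in> I \<Longrightarrow> fcong N (f i) (g i)"
  shows "fcong N (prod f I) (prod g I)"
proof (cases "finite I")
  case True thus ?thesis using assms
    by (induction I rule: finite_induct) (auto intro: fcong_mult simp: fcong_refl)
qed (simp add: fcong_refl)

lemma fcong_inverse:
  assumes "fcong N f g" "f$0 \<noteq> 0"
  shows "fcong N (inverse f) (inverse g)"
proof -
  have g0: "g$0 \<noteq> 0" using assms by (auto simp: fcong_def)
  have e1: "inverse f = (inverse f * g) * inverse g" using g0
    by (simp add: inverse_mult_eq_1' mult.assoc)
  have "fcong N ((inverse f * g) * inverse g) ((inverse f * f) * inverse g)"
    by (intro fcong_mult fcong_refl fcong_sym[OF assms(1)])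
  moreover have "(inverse f * f) * inverse g = inverse g"
    using assms(2) by (simp add: inverse_mult_eq_1)
  ultimately show ?thesis by (metis e1)
qed

lemma fcong_one_minus: "N < k \<Longrightarrow> fcong N (1 - fps_X ^ k) 1"
  by (auto simp: fcong_def fps_X_power_iff)

definition Q :: "nat set \<Rightarrow> rat fps" where
  "Q S = (\<Prod>k\<in>S. (1 - fps_X ^ k))"

lemma Q_trunc:
  assumes "finite S"
  shows "fcong N (Q S) (Q (S \<inter> {..N}))"
proof -
  have "Q S = Q (S \<inter> {..N}) * Q (S - {..N})"
    unfolding Q_def using assms by (subst prod.union_disjoint[symmetric]) (auto intro: prod.cong)
  moreover have "fcong N (Q (S - {..N})) (\<Prod>k\<in>S - {..N}. 1)"
    unfolding Q_def by (intro fcong_prod fcong_one_minus) auto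
  ultimately show ?thesis
    using fcong_mult[OF fcong_refl[of N "Q (S \<inter> {..N})"]] by fastforce
qed

lemma prod_nth0: "(prod f I :: rat fps) $ 0 = (\<Prod>i\<in>I. f i $ 0)"
  by (induction I rule: infinite_finite_induct) auto

lemma Q0: "0 \<notin> S \<Longrightarrow> Q S $ 0 = 1"
  unfolding Q_def prod_nth0 by (intro prod.neutral) (auto intro: gr0I)

definition AA :: "nat \<Rightarrow> rat fps" where "AA N = (\<Prod>j<N. 1 + fps_X^(4*j+3))"
definition DD :: "nat \<Rightarrow> rat fps" where "DD N = (\<Prod>j<N. 1 - fps_X^(2*j+2))"
definition CC :: "nat \<Rightarrow> rat fps" where "CC N = (\<Prod>j<N. 1 - fps_X^(4*j+3))"
definition bb :: "nat \<Rightarrow> rat fps" where "bb N = AA N * inverse (DD N)"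
definition gg :: "nat \<Rightarrow> rat fps" where
  "gg n = (if (n+1) mod 8 \<in> {1,5,6} then 1 else 1 / (1 - fps_X^(n+1)))"
definition pp :: "nat \<Rightarrow> rat fps" where "pp N = (\<Prod>n<N. gg n)"

lemma A_eq: "qpoch (-(fps_X^3)) (fps_X^4) N = AA N"
  unfolding qpoch_def AA_def
  by (intro prod.cong refl) (simp add: power_mult[symmetric] power_add[symmetric] add.commute)

lemma D_eq: "qpoch (fps_X^2) (fps_X^2) N = DD N"
  unfolding qpoch_def DD_def
  by (intro prod.cong refl) (simp add: power_mult[symmetric] power_add[symmetric] add.commute)

lemma prod_Q: "inj f \<Longrightarrow> (\<Prod>j<N. 1 - fps_X^(f j)) = Q (f ` {..<N})"
  unfolding Q_def by (subst prod.reindex) (auto intro: inj_on_subset)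

lemma one_minus_unit: "k > 0 \<Longrightarrow> (1 - fps_X^k :: rat fps) $ 0 = 1"
  by simp

lemma DD0: "DD N $ 0 = 1" unfolding DD_def prod_nth0 by simp
lemma CC0: "CC N $ 0 = 1" unfolding CC_def prod_nth0 by simp

lemma alg:
  fixes a v w x y :: "'a::comm_ring_1"
  assumes "(1 - x) * w = 1"
  shows "a * x * (1 + y) * (v * w) = a * (1 + x * y) * (v * w) - a * v"
proof -
  have "a * v = a * v * ((1 - x) * w)" using assms by simp
  thus ?thesis by (simp add: algebra_simps)
qed

lemma term_eq:
  "qpoch (-(fps_X^3)) (fps_X^4) (n+1) * fps_X^(2*(n+2)) * (1 + fps_X^(2*(n+2)-1))
     / qpoch (fps_X^2) (fps_X^2) (n+2) = bb (n+2) - bb (n+1)"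
proof -
  let ?x = "fps_X^(2*(n+2)) :: rat fps" and ?y = "fps_X^(2*(n+2)-1) :: rat fps"
  let ?w = "inverse (1 - ?x)" and ?v = "inverse (DD (n+1))"
  have D2: "DD (n+2) = DD (n+1) * (1 - ?x)" unfolding DD_def
    by (simp add: algebra_simps)
  have xy: "?x * ?y = fps_X^(4*(n+1)+3)"
  proof -
    have "2*(n+2) + (2*(n+2)-1) = 4*(n+1)+3" by simp
    thus ?thesis by (metis power_add)
  qed
  have A2: "AA (n+2) = AA (n+1) * (1 + ?x * ?y)" unfolding xy
    by (simp add: AA_def)
  have w: "(1 - ?x) * ?w = 1" by (intro inverse_mult_eq_1') simp
  have iD2: "inverse (DD (n+2)) = ?v * ?w" unfolding D2 by (rule fps_inverse_mult)
  have "qpoch (-(fps_X^3)) (fps_X^4) (n+1) * ?x * (1 + ?y) / qpoch (fps_X^2) (fps_X^2) (n+2)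
      = AA (n+1) * ?x * (1 + ?y) / DD (n+2)"
    by (simp only: A_eq D_eq)
  also have "\<dots> = AA (n+1) * ?x * (1 + ?y) * inverse (DD (n+2))"
    by (rule fps_divide_unit) (simp add: DD0)
  also have "\<dots> = AA (n+1) * ?x * (1 + ?y) * (?v * ?w)"
    by (simp only: iD2)
  also have "\<dots> = AA (n+1) * (1 + ?x*?y) * (?v * ?w) - AA (n+1) * ?v"
    by (rule alg[OF w])
  also have "\<dots> = bb (n+2) - bb (n+1)"
    unfolding bb_def iD2 A2 by (simp add: algebra_simps)
  finally show ?thesis .
qed

lemma sq_gen: "(1 + x^k) * (1 - x^k) = (1 - x^(2*k) :: 'a::comm_ring_1)"
proof -
  have e: "x^(2*k) = x^k * x^k" by (simp add: mult_2 power_add)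
  show ?thesis unfolding e by (simp add: algebra_simps)
qed

lemma sq_fps: "(1 + fps_X^k) * (1 - fps_X^k) = (1 - fps_X^(2*k) :: rat fps)"
  by (rule sq_gen)

lemma AC: "AA N * CC N = Q ((\<lambda>j. 8*j+6) ` {..<N})"
proof -
  have "AA N * CC N = (\<Prod>j<N. 1 - fps_X^(8*j+6))"
    unfolding AA_def CC_def prod.distrib[symmetric]
  proof (intro prod.cong refl)
    fix j show "(1 + fps_X ^ (4 * j + 3)) * (1 - fps_X ^ (4 * j + 3)) = (1 - fps_X ^ (8 * j + 6) :: rat fps)"
      using sq_fps[of "4*j+3"] by simp
  qed
  also have "\<dots> = Q ((\<lambda>j. 8*j+6) ` {..<N})" by (rule prod_Q) (auto simp: inj_on_def)
  finally show ?thesis .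
qed

lemma DC: "DD N * CC N = Q ((\<lambda>j. 2*j+2) ` {..<N}) * Q ((\<lambda>j. 4*j+3) ` {..<N})"
proof -
  have "DD N = Q ((\<lambda>j. 2*j+2) ` {..<N})" unfolding DD_def by (rule prod_Q) (auto simp: inj_on_def)
  moreover have "CC N = Q ((\<lambda>j. 4*j+3) ` {..<N})" unfolding CC_def by (rule prod_Q) (auto simp: inj_on_def)
  ultimately show ?thesis by simp
qed

lemma s6: "(\<lambda>j. 8*j+6) ` {..<N::nat} \<inter> {..N} = {k. k \<le> N \<and> k mod 8 = 6}"
proof (intro set_eqI iffI)
  fix k assume k: "k \<in> {k. k \<le> N \<and> k mod 8 = 6}"
  hence k1: "k \<le> N" "k mod 8 = 6" by simp_all
  have e: "k = 8 * (k div 8) + 6" using k1(2) by presburger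
  have "k \<in> (\<lambda>j. 8*j+6) ` {..<N}"
  proof (rule image_eqI[where x="k div 8"])
    show "k = 8 * (k div 8) + 6" by (rule e)
    show "k div 8 \<in> {..<N}" using e k1(1) by simp
  qed
  thus "k \<in> (\<lambda>j. 8*j+6) ` {..<N} \<inter> {..N}" using k1 by simp
next
  fix k assume "k \<in> (\<lambda>j. 8*j+6) ` {..<N::nat} \<inter> {..N}"
  then obtain j where "k = 8*j+6" "k \<le> N" by blast
  thus "k \<in> {k. k \<le> N \<and> k mod 8 = 6}" by simp
qed

lemma s2: "(\<lambda>j. 2*j+2) ` {..<N::nat} \<inter> {..N} = {k. 0 < k \<and> k \<le> N \<and> k mod 2 = 0}"
proof (intro set_eqI iffI)
  fix k assume k: "k \<in> {k. 0 < k \<and> k \<le> N \<and> k mod 2 = 0}"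
  hence k1: "0 < k" "k \<le> N" "k mod 2 = 0" by simp_all
  have e: "k = 2 * (k div 2 - 1) + 2" using k1(1,3) by presburger
  have "k \<in> (\<lambda>j. 2*j+2) ` {..<N}"
  proof (rule image_eqI[where x="k div 2 - 1"])
    show "k = 2 * (k div 2 - 1) + 2" by (rule e)
    show "k div 2 - 1 \<in> {..<N}" using e k1(2) by simp
  qed
  thus "k \<in> (\<lambda>j. 2*j+2) ` {..<N} \<inter> {..N}" using k1 by simp
next
  fix k assume "k \<in> (\<lambda>j. 2*j+2) ` {..<N::nat} \<inter> {..N}"
  then obtain j where "k = 2*j+2" "k \<le> N" by blast
  thus "k \<in> {k. 0 < k \<and> k \<le> N \<and> k mod 2 = 0}" by simp
qed

lemma s3: "(\<lambda>j. 4*j+3) ` {..<N::nat} \<inter> {..N} = {k. k \<le> N \<and> k mod 4 = 3}"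
proof (intro set_eqI iffI)
  fix k assume k: "k \<in> {k. k \<le> N \<and> k mod 4 = 3}"
  hence k1: "k \<le> N" "k mod 4 = 3" by simp_all
  have e: "k = 4 * (k div 4) + 3" using k1(2) by presburger
  have "k \<in> (\<lambda>j. 4*j+3) ` {..<N}"
  proof (rule image_eqI[where x="k div 4"])
    show "k = 4 * (k div 4) + 3" by (rule e)
    show "k div 4 \<in> {..<N}" using e k1(1) by simp
  qed
  thus "k \<in> (\<lambda>j. 4*j+3) ` {..<N} \<inter> {..N}" using k1 by simp
next
  fix k assume "k \<in> (\<lambda>j. 4*j+3) ` {..<N::nat} \<inter> {..N}"
  then obtain j where "k = 4*j+3" "k \<le> N" by blast
  thus "k \<in> {k. k \<le> N \<and> k mod 4 = 3}" by simp
qed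

definition TT :: "nat \<Rightarrow> nat set" where "TT N = {k. 0 < k \<and> k \<le> N \<and> k mod 8 \<notin> {1,5,6}}"
definition UU :: "nat \<Rightarrow> nat set" where "UU N = {k. 0 < k \<and> k \<le> N \<and> k mod 8 \<notin> {1,5}}"

lemma u1: "{k. k \<le> N \<and> k mod 8 = 6} \<union> TT N = UU N"
  unfolding TT_def UU_def by auto

lemma u1d: "{k. k \<le> N \<and> k mod 8 = 6} \<inter> TT N = {}"
  unfolding TT_def by auto

lemma u2: "{k::nat. 0 < k \<and> k \<le> N \<and> k mod 2 = 0} \<union> {k. k \<le> N \<and> k mod 4 = 3} = UU N"
  unfolding UU_def apply (rule set_eqI) apply simp by presburger

lemma u2d: "{k::nat. 0 < k \<and> k \<le> N \<and> k mod 2 = 0} \<inter> {k. k \<le> N \<and> k mod 4 = 3} = {}"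
  apply (rule set_eqI) apply simp by presburger

lemma Q_union: "finite A \<Longrightarrow> finite B \<Longrightarrow> A \<inter> B = {} \<Longrightarrow> Q (A \<union> B) = Q A * Q B"
  unfolding Q_def by (rule prod.union_disjoint)

lemma finite_TT: "finite (TT N)" unfolding TT_def by (rule finite_subset[of _ "{..N}"]) auto

definition hh :: "nat \<Rightarrow> rat fps" where
  "hh n = (if (n+1) mod 8 \<in> {1,5,6} then 1 else 1 - fps_X^(n+1))"

lemma gh: "gg n * hh n = 1"
  unfolding gg_def hh_def
  by (auto simp: fps_divide_unit inverse_mult_eq_1)

lemma hh_Q: "(\<Prod>n<N. hh n) = Q (TT N)"
proof (induction N)
  case 0
  have "TT 0 = {}" by (auto simp: TT_def)
  thus ?case by (simp add: Q_def)
next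
  case (Suc N)
  show ?case
  proof (cases "(N+1) mod 8 \<in> {1,5,6}")
    case True
    hence "TT (Suc N) = TT N" unfolding TT_def using le_Suc_eq by auto
    thus ?thesis using Suc True by (simp add: hh_def)
  next
    case False
    hence "TT (Suc N) = insert (Suc N) (TT N)" unfolding TT_def using le_Suc_eq by auto
    moreover have "Suc N \<notin> TT N" by (simp add: TT_def)
    ultimately show ?thesis using Suc False finite_TT[of N] by (simp add: hh_def Q_def mult.commute)
  qed
qed

lemma pQ: "pp N * Q (TT N) = 1"
  unfolding pp_def hh_Q[symmetric] prod.distrib[symmetric] gh by simp

lemma key: "fcong N (bb N) (pp N)"
proof -
  have f1: "fcong N (AA N * CC N * Q (TT N)) (Q (UU N))"
  proof -
    have "fcong N (AA N * CC N * Q (TT N)) (Q ((\<lambda>j. 8*j+6) ` {..<N} \<inter> {..N}) * Q (TT N))"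
      unfolding AC by (intro fcong_mult fcong_refl Q_trunc) auto
    also have "Q ((\<lambda>j. 8*j+6) ` {..<N} \<inter> {..N}) * Q (TT N) = Q (UU N)"
      unfolding s6 u1[symmetric] using u1d finite_TT
      by (subst Q_union) auto
    finally show ?thesis .
  qed
  have f2: "fcong N (DD N * CC N) (Q (UU N))"
  proof -
    have "fcong N (DD N * CC N) (Q ((\<lambda>j. 2*j+2) ` {..<N} \<inter> {..N}) * Q ((\<lambda>j. 4*j+3) ` {..<N} \<inter> {..N}))"
      unfolding DC by (intro fcong_mult Q_trunc) auto
    also have "Q ((\<lambda>j. 2*j+2) ` {..<N} \<inter> {..N}) * Q ((\<lambda>j. 4*j+3) ` {..<N} \<inter> {..N}) = Q (UU N)"
      unfolding s2 s3 u2[symmetric] using u2d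
      by (subst Q_union) auto
    finally show ?thesis .
  qed
  have f3: "fcong N (AA N * CC N * Q (TT N) * (inverse (DD N) * inverse (CC N)))
                    (DD N * CC N * (inverse (DD N) * inverse (CC N)))"
    by (intro fcong_mult fcong_refl fcong_trans[OF f1 fcong_sym[OF f2]])
  have iD: "DD N * inverse (DD N) = 1" by (rule inverse_mult_eq_1') (simp add: DD0)
  have iC: "CC N * inverse (CC N) = 1" by (rule inverse_mult_eq_1') (simp add: CC0)
  have e1: "DD N * CC N * (inverse (DD N) * inverse (CC N)) = (DD N * inverse (DD N)) * (CC N * inverse (CC N))"
    by (simp add: ac_simps)
  have e2: "AA N * CC N * Q (TT N) * (inverse (DD N) * inverse (CC N)) = bb N * Q (TT N) * (CC N * inverse (CC N))"
    unfolding bb_def by (simp add: ac_simps)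
  have f4: "fcong N (bb N * Q (TT N)) 1"
    using f3 unfolding e1 e2 iD iC by simp
  have "fcong N (pp N * (bb N * Q (TT N))) (pp N * 1)"
    by (intro fcong_mult fcong_refl f4)
  moreover have "pp N * (bb N * Q (TT N)) = bb N"
    using pQ[of N] by (metis mult.left_commute mult_1_right)
  ultimately show ?thesis by simp
qed

lemma gg_cong: "N \<le> M \<Longrightarrow> fcong N (gg M) 1"
proof (cases "(M+1) mod 8 \<in> {1,5,6}")
  case True thus ?thesis by (simp add: gg_def fcong_refl)
next
  case False
  assume "N \<le> M"
  have "gg M = inverse (1 - fps_X^(M+1))" using False by (simp add: gg_def fps_divide_unit)
  moreover have "fcong N (inverse (1 - fps_X^(M+1))) (inverse (1 :: rat fps))"
    using \<open>N \<le> M\<close> by (intro fcong_inverse fcong_one_minus) auto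
  ultimately show ?thesis by simp
qed

lemma pp_stab: "N \<le> M \<Longrightarrow> fcong N (pp M) (pp N)"
proof (induction M rule: dec_induct)
  case base thus ?case by (rule fcong_refl)
next
  case (step M)
  have "fcong N (pp M * gg M) (pp N * 1)"
    using step by (intro fcong_mult gg_cong) auto
  thus ?case by (simp add: pp_def)
qed

lemma tele: "(\<Sum>i<n. bb (i+2) - bb (i+1)) = bb (n+1) - bb 1"
  by (induction n) auto

lemma b1: "1 + (fps_X^2 + fps_X^3) / (1 - fps_X^2) = (bb 1 :: rat fps)"
proof -
  let ?w = "inverse (1 - fps_X^2) :: rat fps"
  have w: "(1 - fps_X^2) * ?w = 1" by (intro inverse_mult_eq_1') simp
  have "(fps_X^2 + fps_X^3) / (1 - fps_X^2) = (fps_X^2 + fps_X^3) * ?w"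
    by (rule fps_divide_unit) simp
  moreover have "bb 1 = (1 + fps_X^3) * ?w"
  proof -
    have a: "AA 1 = 1 + fps_X^(4*0+3)" unfolding AA_def
      by (simp only: One_nat_def prod.lessThan_Suc lessThan_0 prod.empty mult_1_left)
    have d: "DD 1 = 1 - fps_X^(2*0+2)" unfolding DD_def
      by (simp only: One_nat_def prod.lessThan_Suc lessThan_0 prod.empty mult_1_left)
    show ?thesis unfolding bb_def a d by (simp only: mult_0_right add_0)
  qed
  moreover have "1 + (fps_X^2 + fps_X^3) * ?w = (1 + fps_X^3) * ?w"
  proof -
    have "1 + (fps_X^2 + fps_X^3) * ?w = (1 - fps_X^2) * ?w + (fps_X^2 + fps_X^3) * ?w"
      using w by simp
    also have "\<dots> = (1 + fps_X^3) * ?w" by (simp add: algebra_simps)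
    finally show ?thesis .
  qed
  ultimately show ?thesis by simp
qed

theorem theorem12:
  shows "let q = (fps_X :: rat fps) in \<exists>S. (\<lambda>n. qpoch (- (q ^ 3)) (q^4) (n + 1) * q ^ (2 * (n + 2)) * (1 + q ^ (2 * (n + 2) - 1))
                    / qpoch (q^2) (q^2) (n + 2)) sums S
          \<and> (\<lambda>n. if (n + 1) mod 8 \<in> {1, 5, 6} then 1 else 1 / (1 - q ^ (n + 1)))
              has_prod (1 + (q^2 + q^3) / (1 - q^2) + S)"
proof -
  define P where "P = Abs_fps (\<lambda>i. pp i $ i)"
  have pP: "pp N $ i = P $ i" if "i \<le> N" for N i
    using pp_stab[OF that] that by (simp add: P_def fcong_def)
  have bP: "bb N $ i = P $ i" if "i \<le> N" for N i
    using key[of N] that pP[OF that] by (simp add: fcong_def)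
  have P0: "P \<noteq> 0"
  proof
    assume "P = 0"
    hence "P $ 0 = 0" by simp
    moreover have "P $ 0 = 1" by (simp add: P_def pp_def)
    ultimately show False by simp
  qed
  have tm: "(\<lambda>n. qpoch (- (fps_X ^ 3)) (fps_X^4) (n + 1) * fps_X ^ (2 * (n + 2)) * (1 + fps_X ^ (2 * (n + 2) - 1))
                    / qpoch (fps_X^2) (fps_X^2) (n + 2)) = (\<lambda>n. bb (n+2) - bb (n+1))"
    by (rule ext, rule term_eq)
  have sm: "(\<lambda>n. bb (n+2) - bb (n+1)) sums (P - bb 1)"
    unfolding sums_def tele
  proof (rule tendsto_fpsI)
    fix i
    show "\<forall>\<^sub>F n in sequentially. (bb (n+1) - bb 1) $ i = (P - bb 1) $ i"
      using eventually_ge_at_top[of i] by eventually_elim (simp add: bP)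
  qed
  have hp: "gg has_prod P"
    unfolding has_prod_def raw_has_prod_def
  proof (intro disjI1 conjI P0)
    have e: "(\<Prod>k\<le>n. gg (k+0)) = pp (Suc n)" for n
      by (simp add: pp_def lessThan_Suc_atMost)
    show "(\<lambda>n. \<Prod>k\<le>n. gg (k+0)) \<longlonglongrightarrow> P"
      unfolding e
    proof (rule tendsto_fpsI)
      fix i
      show "\<forall>\<^sub>F n in sequentially. pp (Suc n) $ i = P $ i"
        using eventually_ge_at_top[of i] by eventually_elim (simp add: pP)
    qed
  qed
  have fin: "1 + (fps_X^2 + fps_X^3) / (1 - fps_X^2) + (P - bb 1) = (P :: rat fps)"
    unfolding b1 by simp
  have gl: "(\<lambda>n. if (n + 1) mod 8 \<in> {1, 5, 6} then 1 else 1 / (1 - fps_X ^ (n + 1))) = gg"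
    by (rule ext) (simp only: gg_def)
  have hp2: "(\<lambda>n. if (n + 1) mod 8 \<in> {1, 5, 6} then 1 else 1 / (1 - fps_X ^ (n + 1)))
      has_prod (1 + (fps_X^2 + fps_X^3) / (1 - fps_X^2) + (P - bb 1))"
    unfolding gl fin by (rule hp)
  show ?thesis
    unfolding Let_def tm
    by (rule exI[of _ "P - bb 1"], rule conjI[OF sm hp2])
qed

end
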